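(* If $f : X \to \mathbb{R}$ is semi-Borel, then the game $\Gamma(f)$ is determined (one of the two players has a winning strategy).
   Context: Let $A$ be a non-empty countable set and $T$ a pruned tree on $A$ (a set of finite sequences of elements of $A$, closed under initial segments, in which every sequence has a proper extension in $T$). Let $X$ be the set of infinite branches of $T$, with the topology generated by the cylinder sets $O(s) = \{x \in X : s \text{ is an initial segment of } x\}$, $s \in T$. $f$ is semi-Borel if for each $r \in \mathbb{R}$ the set $\{f \ge r\} = \{x \in X : f(x) \ge r\}$ is co-analytic. The game $\Gamma(f)$: Player I and Player II alternate, Player I moving first; Player I plays $x_0, x_1, \dots \in A$ subject to $(x_0,\dots,x_t) \in T$ for all $t$, and after each move $x_t$ Player II plays a real number $v_t$. Player II wins the run iff $f(x_0,x_1,\dots) = \limsup_{t\to\infty} v_t$; otherwise Player I wins. *)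

theory Defs
  imports "HOL-Analysis.Analysis"
begin

definition is_tree :: "'a set \<Rightarrow> 'a list set \<Rightarrow> bool" where
  "is_tree A T \<longleftrightarrow> T \<subseteq> lists A \<and> (\<forall>s\<in>T. \<forall>n. take n s \<in> T)"

definition pruned :: "'a list set \<Rightarrow> bool" where
  "pruned T \<longleftrightarrow> (\<forall>s\<in>T. \<exists>u\<in>T. length s < length u \<and> take (length s) u = s)"

definition branches :: "'a list set \<Rightarrow> (nat \<Rightarrow> 'a) set" where
  "branches T = {x. \<forall>n. map x [0..<n] \<in> T}"

definition cyl :: "'a list set \<Rightarrow> 'a list \<Rightarrow> (nat \<Rightarrow> 'a) set" where
  "cyl T s = {x \<in> branches T. map x [0..<length s] = s}"

definition branch_topology :: "'a list set \<Rightarrow> (nat \<Rightarrow> 'a) topology" where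
  "branch_topology T = topology_generated_by (cyl T ` T)"

definition baire_topology :: "(nat \<Rightarrow> nat) topology" where
  "baire_topology = product_topology (\<lambda>_. (euclidean :: nat topology)) UNIV"

definition analytic_in :: "'a list set \<Rightarrow> (nat \<Rightarrow> 'a) set \<Rightarrow> bool" where
  "analytic_in T S \<longleftrightarrow> S \<subseteq> branches T \<and>
     (S = {} \<or> (\<exists>g. continuous_map baire_topology (branch_topology T) g \<and>
                    g ` topspace baire_topology = S))"

definition coanalytic_in :: "'a list set \<Rightarrow> (nat \<Rightarrow> 'a) set \<Rightarrow> bool" where
  "coanalytic_in T S \<longleftrightarrow> S \<subseteq> branches T \<and> analytic_in T (branches T - S)"

definition semi_Borel :: "'a list set \<Rightarrow> ((nat \<Rightarrow> 'a) \<Rightarrow> real) \<Rightarrow> bool" where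
  "semi_Borel T f \<longleftrightarrow> (\<forall>r::real. coanalytic_in T {x \<in> branches T. f x \<ge> r})"

text \<open>Game positions: the list of completed rounds (x_t, v_t).
  A strategy of Player I maps a position to his next move x_t;
  a strategy of Player II maps a position and I's current move x_t to v_t.\<close>
type_synonym ('a) stratI = "('a \<times> real) list \<Rightarrow> 'a"
type_synonym ('a) stratII = "('a \<times> real) list \<Rightarrow> 'a \<Rightarrow> real"

definition legal_stratI :: "'a list set \<Rightarrow> 'a stratI \<Rightarrow> bool" where
  "legal_stratI T \<sigma> \<longleftrightarrow> (\<forall>h. map fst h \<in> T \<longrightarrow> map fst h @ [\<sigma> h] \<in> T)"

primrec play_hist :: "'a stratI \<Rightarrow> 'a stratII \<Rightarrow> nat \<Rightarrow> ('a \<times> real) list" where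
  "play_hist \<sigma> \<tau> 0 = []"
| "play_hist \<sigma> \<tau> (Suc n) =
     play_hist \<sigma> \<tau> n @ [(\<sigma> (play_hist \<sigma> \<tau> n), \<tau> (play_hist \<sigma> \<tau> n) (\<sigma> (play_hist \<sigma> \<tau> n)))]"

definition play_x :: "'a stratI \<Rightarrow> 'a stratII \<Rightarrow> nat \<Rightarrow> 'a" where
  "play_x \<sigma> \<tau> t = fst (play_hist \<sigma> \<tau> (Suc t) ! t)"

definition play_v :: "'a stratI \<Rightarrow> 'a stratII \<Rightarrow> nat \<Rightarrow> real" where
  "play_v \<sigma> \<tau> t = snd (play_hist \<sigma> \<tau> (Suc t) ! t)"

definition II_wins_run :: "((nat \<Rightarrow> 'a) \<Rightarrow> real) \<Rightarrow> 'a stratI \<Rightarrow> 'a stratII \<Rightarrow> bool" where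
  "II_wins_run f \<sigma> \<tau> \<longleftrightarrow>
     ereal (f (play_x \<sigma> \<tau>)) = limsup (\<lambda>t. ereal (play_v \<sigma> \<tau> t))"

definition winning_I :: "'a list set \<Rightarrow> ((nat \<Rightarrow> 'a) \<Rightarrow> real) \<Rightarrow> 'a stratI \<Rightarrow> bool" where
  "winning_I T f \<sigma> \<longleftrightarrow> legal_stratI T \<sigma> \<and> (\<forall>\<tau>. \<not> II_wins_run f \<sigma> \<tau>)"

definition winning_II :: "'a list set \<Rightarrow> ((nat \<Rightarrow> 'a) \<Rightarrow> real) \<Rightarrow> 'a stratII \<Rightarrow> bool" where
  "winning_II T f \<tau> \<longleftrightarrow> (\<forall>\<sigma>. legal_stratI T \<sigma> \<longrightarrow> II_wins_run f \<sigma> \<tau>)"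

definition game_determined :: "'a list set \<Rightarrow> ((nat \<Rightarrow> 'a) \<Rightarrow> real) \<Rightarrow> bool" where
  "game_determined T f \<longleftrightarrow> (\<exists>\<sigma>. winning_I T f \<sigma>) \<or> (\<exists>\<tau>. winning_II T f \<tau>)"

end

theory Submission
  imports Defs
begin


lemma limsup_ge_freq:
  fixes X :: "nat \<Rightarrow> ereal"
  assumes "\<And>N. \<exists>n\<ge>N. C \<le> X n"
  shows "C \<le> limsup X"
proof (rule Limsup_greatest)
  fix P assume "eventually P sequentially"
  then obtain N where N: "\<And>n. n \<ge> N \<Longrightarrow> P n" by (auto simp: eventually_sequentially)
  obtain n where "n \<ge> N" "C \<le> X n" using assms by blast
  then show "C \<le> Sup (X ` Collect P)" using N by (meson Sup_upper2 image_eqI mem_Collect_eq)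
qed

lemma limsup_le_ev:
  fixes X :: "nat \<Rightarrow> ereal"
  assumes "\<And>n. n \<ge> N \<Longrightarrow> X n \<le> C"
  shows "limsup X \<le> C"
  by (rule Limsup_bounded) (auto simp: eventually_sequentially intro: assms)

definition pre :: "(nat \<Rightarrow> 'b) \<Rightarrow> nat \<Rightarrow> 'b list" where
  "pre x n = map x [0..<n]"

lemma length_pre[simp]: "length (pre x n) = n" by (simp add: pre_def)
lemma pre_0[simp]: "pre x 0 = []" by (simp add: pre_def)
lemma pre_Suc: "pre x (Suc n) = pre x n @ [x n]" by (simp add: pre_def)
lemma take_pre[simp]: "take k (pre x n) = pre x (min k n)"
  by (simp add: pre_def take_map min_def)
lemma nth_pre[simp]: "i < n \<Longrightarrow> pre x n ! i = x i" by (simp add: pre_def)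
lemma pre_eq_iff: "pre x n = pre y n \<longleftrightarrow> (\<forall>i<n. x i = y i)"
  by (auto simp: pre_def)
lemma pre_mono_eq: "pre x n = pre y n \<Longrightarrow> k \<le> n \<Longrightarrow> pre x k = pre y k"
  by (auto simp: pre_eq_iff)
lemma eq_if_pre: "(\<And>n. n \<ge> N \<Longrightarrow> pre x n = pre y n) \<Longrightarrow> x = y"
proof
  fix i assume H: "\<And>n. n \<ge> N \<Longrightarrow> pre x n = pre y n"
  have "pre x (max N (Suc i)) = pre y (max N (Suc i))" by (rule H) simp
  then show "x i = y i" by (auto simp: pre_eq_iff)
qed

lemma cyl_iff: "x \<in> cyl T u \<longleftrightarrow> x \<in> branches T \<and> pre x (length u) = u"
  by (simp add: cyl_def pre_def)
lemma branches_iff: "x \<in> branches T \<longleftrightarrow> (\<forall>n. pre x n \<in> T)"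
  by (simp add: branches_def pre_def)

lemma length_play_hist[simp]: "length (play_hist \<sigma> \<tau> n) = n"
  by (induction n) auto

lemma play_hist_nth: "i < n \<Longrightarrow> play_hist \<sigma> \<tau> n ! i = play_hist \<sigma> \<tau> (Suc i) ! i"
proof (induction n)
  case (Suc n)
  then show ?case by (cases "i < n") (auto simp: nth_append less_Suc_eq)
qed simp

lemma play_hist_app_nth[simp]: "(play_hist \<sigma> \<tau> i @ [z]) ! i = z"
  by (metis length_play_hist nth_append_length)

lemma play_hist_last: "play_hist \<sigma> \<tau> (Suc i) ! i
   = (\<sigma> (play_hist \<sigma> \<tau> i), \<tau> (play_hist \<sigma> \<tau> i) (\<sigma> (play_hist \<sigma> \<tau> i)))"
  by (metis length_play_hist nth_append_length play_hist.simps(2))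

lemma play_x_eq: "play_x \<sigma> \<tau> i = \<sigma> (play_hist \<sigma> \<tau> i)"
  by (simp add: play_x_def play_hist_last)
lemma play_v_eq: "play_v \<sigma> \<tau> i = \<tau> (play_hist \<sigma> \<tau> i) (play_x \<sigma> \<tau> i)"
  by (simp add: play_v_def play_x_def play_hist_last)

lemma play_hist_nth': "i < n \<Longrightarrow> play_hist \<sigma> \<tau> n ! i = (play_x \<sigma> \<tau> i, play_v \<sigma> \<tau> i)"
  by (simp add: play_hist_nth play_hist_last play_x_eq play_v_eq)

lemma map_fst_play: "map fst (play_hist \<sigma> \<tau> n) = pre (play_x \<sigma> \<tau>) n"
  by (rule nth_equalityI) (auto simp: play_hist_nth')

lemma tree_nil: "is_tree A T \<Longrightarrow> T \<noteq> {} \<Longrightarrow> [] \<in> T"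
  unfolding is_tree_def by (metis all_not_in_conv take0)

lemma legal_play_branch:
  assumes "is_tree A T" "T \<noteq> {}" "legal_stratI T \<sigma>"
  shows "play_x \<sigma> \<tau> \<in> branches T"
proof -
  have "pre (play_x \<sigma> \<tau>) n \<in> T" for n
  proof (induction n)
    case 0 then show ?case using tree_nil assms by simp
  next
    case (Suc n)
    then have "map fst (play_hist \<sigma> \<tau> n) \<in> T" by (simp add: map_fst_play)
    then have "map fst (play_hist \<sigma> \<tau> n) @ [\<sigma> (play_hist \<sigma> \<tau> n)] \<in> T"
      using assms(3) by (simp add: legal_stratI_def)
    then show ?case by (metis map_fst_play pre_Suc play_x_eq)
  qed
  then show ?thesis by (simp add: branches_iff)
qed

lemma pruned_ext:
  assumes "is_tree A T" "pruned T" "s \<in> T"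
  shows "\<exists>a. s @ [a] \<in> T"
proof -
  obtain u where u: "u \<in> T" "length s < length u" "take (length s) u = s"
    using assms by (auto simp: pruned_def)
  have "take (Suc (length s)) u \<in> T" using assms(1) u(1) by (simp add: is_tree_def)
  moreover have "take (Suc (length s)) u = s @ [u ! length s]"
    using u by (simp add: take_Suc_conv_app_nth)
  ultimately show ?thesis by metis
qed

definition Op :: "'b list set \<Rightarrow> (nat \<Rightarrow> 'b) set" where
  "Op W = {x. \<exists>n. pre x n \<in> W}"



definition As :: "((nat\<Rightarrow>nat) \<Rightarrow> (nat\<Rightarrow>'a)) \<Rightarrow> nat list \<Rightarrow> (nat\<Rightarrow>'a) set" where
  "As g s = g ` {y. pre y (length s) = s}"

definition Ng :: "'a list set \<Rightarrow> (nat\<Rightarrow>'a) set \<Rightarrow> ((nat\<Rightarrow>nat)\<Rightarrow>(nat\<Rightarrow>'a)) \<Rightarrow> 'a list \<Rightarrow> nat list \<Rightarrow> bool" where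
  "Ng T B g u s \<longleftrightarrow> (\<exists>ZS. countable ZS \<and> (\<forall>Z\<in>ZS. B \<subseteq> Op Z) \<and> (\<forall>x \<in> As g s \<inter> cyl T u. \<exists>Z\<in>ZS. x \<notin> Op Z))"

lemma key:
  assumes cT: "countable T" and BX: "B \<subseteq> branches T"
    and H: "\<forall>b\<in>B \<inter> cyl T u. \<exists>n\<ge>length u. \<forall>k. Ng T B g (pre b n) (s@[k])"
  shows "Ng T B g u s"
proof -
  define W where "W = {v\<in>T. length u \<le> length v \<and> take (length u) v = u \<and> (\<forall>k. Ng T B g v (s@[k]))}"
  define Z0 where "Z0 = {w. length w = length u \<and> w \<noteq> u} \<union> W"
  define P where "P = (\<lambda>v k ZS. countable ZS \<and> (\<forall>Z\<in>ZS. B \<subseteq> Op Z) \<and> (\<forall>x \<in> As g (s@[k]) \<inter> cyl T v. \<exists>Z\<in>ZS. x \<notin> Op Z))"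
  define ZZ where "ZZ = (\<lambda>v k. SOME ZS. P v k ZS)"
  have ZZ: "P v k (ZZ v k)" if "v \<in> W" for v k
  proof -
    have "Ng T B g v (s@[k])" using that by (simp add: W_def)
    then have "\<exists>ZS. P v k ZS" by (simp add: Ng_def P_def)
    then show ?thesis unfolding ZZ_def by (rule someI_ex)
  qed
  define ZS where "ZS = insert Z0 (\<Union>v\<in>W. \<Union>k. ZZ v k)"
  have "countable W" using cT by (rule countable_subset[rotated]) (auto simp: W_def)
  then have cZS: "countable ZS" unfolding ZS_def using ZZ by (auto simp: P_def intro!: countable_UN)
  have B0: "B \<subseteq> Op Z0"
  proof
    fix b assume b: "b \<in> B"
    show "b \<in> Op Z0"
    proof (cases "pre b (length u) = u")
      case False
      then have "pre b (length u) \<in> Z0" by (simp add: Z0_def)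
      then show ?thesis by (auto simp: Op_def)
    next
      case True
      then have "b \<in> B \<inter> cyl T u" using b BX by (auto simp: cyl_iff)
      then obtain n where n: "n \<ge> length u" "\<forall>k. Ng T B g (pre b n) (s@[k])" using H by blast
      have "pre b n \<in> T" using b BX by (auto simp: branches_iff)
      then have "pre b n \<in> W" using n True by (auto simp: W_def min_def)
      then show ?thesis by (auto simp: Op_def Z0_def)
    qed
  qed
  have "\<forall>Z\<in>ZS. B \<subseteq> Op Z" using B0 ZZ by (auto simp: ZS_def P_def)
  moreover have "\<exists>Z\<in>ZS. x \<notin> Op Z" if x: "x \<in> As g s \<inter> cyl T u" for x
  proof (cases "x \<in> Op Z0")
    case False then show ?thesis by (auto simp: ZS_def)
  next
    case True
    then obtain n where n: "pre x n \<in> Z0" by (auto simp: Op_def)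
    have xu: "pre x (length u) = u" "x \<in> branches T" using x by (auto simp: cyl_iff)
    have "pre x n \<in> W" using n xu by (auto simp: Z0_def)
    obtain y where y: "x = g y" "pre y (length s) = s" using x by (auto simp: As_def)
    have "pre y (length (s @ [y (length s)])) = s @ [y (length s)]" using y by (simp add: pre_Suc)
    then have "x \<in> As g (s @ [y (length s)]) \<inter> cyl T (pre x n)"
      using y xu by (auto simp: As_def cyl_iff)
    then obtain Z where "Z \<in> ZZ (pre x n) (y (length s))" "x \<notin> Op Z"
      using ZZ[OF \<open>pre x n \<in> W\<close>, of "y (length s)"] unfolding P_def by blast
    then show ?thesis using \<open>pre x n \<in> W\<close> by (auto simp: ZS_def)
  qed
  ultimately show ?thesis using cZS unfolding Ng_def by blast
qed

lemma key_contra: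
  assumes "countable T" "B \<subseteq> branches T" "\<not> Ng T B g u s"
  shows "\<exists>b\<in>B \<inter> cyl T u. \<forall>n\<ge>length u. \<exists>k. \<not> Ng T B g (pre b n) (s@[k])"
  using key[OF assms(1,2), of u g s] assms(3) by blast

lemma notNg_nonempty:
  assumes "\<not> Ng T B g u s" shows "\<exists>x. x \<in> As g s \<inter> cyl T u"
proof (rule ccontr)
  assume "\<not> ?thesis"
  then have "Ng T B g u s" unfolding Ng_def by (intro exI[of _ "{}"]) auto
  then show False using assms by simp
qed

lemma Op_nil: "Op {[]} = UNIV" by (auto simp: Op_def intro: exI[of _ 0])

lemma Ng_root:
  assumes "Ng T B g [] []"
  shows "\<exists>Z::nat \<Rightarrow> _. (\<forall>m. B \<subseteq> Op (Z m)) \<and> (\<forall>x \<in> range g \<inter> branches T. \<exists>m. x \<notin> Op (Z m))"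
proof -
  obtain ZS where ZS: "countable ZS" "\<forall>Z\<in>ZS. B \<subseteq> Op Z" "\<forall>x \<in> As g [] \<inter> cyl T []. \<exists>Z\<in>ZS. x \<notin> Op Z"
    using assms by (auto simp: Ng_def)
  define ZS' where "ZS' = insert {[]} ZS"
  have c: "countable ZS'" "ZS' \<noteq> {}" using ZS by (auto simp: ZS'_def)
  define Z where "Z = from_nat_into ZS'"
  have "B \<subseteq> Op (Z m)" for m
  proof -
    have "Z m \<in> ZS'" using from_nat_into[OF c(2)] by (simp add: Z_def)
    then show ?thesis using ZS(2) Op_nil by (auto simp: ZS'_def)
  qed
  moreover have "\<exists>m. x \<notin> Op (Z m)" if "x \<in> range g \<inter> branches T" for x
  proof -
    have "x \<in> As g [] \<inter> cyl T []" using that by (auto simp: As_def cyl_iff)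
    then obtain Z' where "Z' \<in> ZS" "x \<notin> Op Z'" using ZS(3) by blast
    then have "Z' \<in> ZS'" by (auto simp: ZS'_def)
    then obtain m where "Z m = Z'" using from_nat_into_surj[OF c(1)] by (auto simp: Z_def)
    then show ?thesis using \<open>x \<notin> Op Z'\<close> by blast
  qed
  ultimately show ?thesis by blast
qed



definition nxt where
  "nxt T B g u s = (SOME b. b \<in> B \<inter> cyl T u \<and> (\<forall>n\<ge>length u. \<exists>k. \<not> Ng T B g (pre b n) (s@[k])))"
definition kk where
  "kk T B g b n s = (SOME k. \<not> Ng T B g (pre b n) (s@[k]))"
definition stp :: "'a list set \<Rightarrow> (nat\<Rightarrow>'a) set \<Rightarrow> ((nat\<Rightarrow>nat)\<Rightarrow>(nat\<Rightarrow>'a)) \<Rightarrow> real \<Rightarrow> nat \<Rightarrow> ('a \<times> real) \<Rightarrow> ((nat\<Rightarrow>'a) \<times> nat list) \<Rightarrow> ((nat\<Rightarrow>'a) \<times> nat list)" where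
  "stp T B g m t hv bs = (if snd hv > m then
     (let s' = snd bs @ [kk T B g (fst bs) (Suc t) (snd bs)] in (nxt T B g (pre (fst bs) (Suc t)) s', s'))
     else bs)"
primrec stn where
  "stn T B g m h 0 = (nxt T B g [] [], [])"
| "stn T B g m h (Suc n) = stp T B g m n (h!n) (stn T B g m h n)"
definition sigI :: "'a list set \<Rightarrow> (nat\<Rightarrow>'a) set \<Rightarrow> ((nat\<Rightarrow>nat)\<Rightarrow>(nat\<Rightarrow>'a)) \<Rightarrow> real \<Rightarrow> 'a stratI" where
  "sigI T B g m h = (let b = fst (stn T B g m h (length h)) in
     if map fst h @ [b (length h)] \<in> T then b (length h) else (SOME a. map fst h @ [a] \<in> T))"

lemma stn_cong: "(\<forall>i<n. h!i = h'!i) \<Longrightarrow> stn T B g m h n = stn T B g m h' n"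
  by (induction n) auto

lemma nxt_prop:
  assumes "countable T" "B \<subseteq> branches T" "\<not> Ng T B g u s"
  shows "nxt T B g u s \<in> B \<inter> cyl T u \<and> (\<forall>n\<ge>length u. \<exists>k. \<not> Ng T B g (pre (nxt T B g u s) n) (s@[k]))"
proof -
  have "\<exists>b. b \<in> B \<inter> cyl T u \<and> (\<forall>n\<ge>length u. \<exists>k. \<not> Ng T B g (pre b n) (s@[k]))"
    using key_contra[OF assms] by blast
  then show ?thesis unfolding nxt_def by (rule someI_ex)
qed

lemma kk_prop:
  assumes "\<exists>k. \<not> Ng T B g (pre b n) (s@[k])"
  shows "\<not> Ng T B g (pre b n) (s@[kk T B g b n s])"
  unfolding kk_def using assms by (rule someI_ex)

lemma As_ext: "As g (s@[k]) \<subseteq> As g s"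
proof
  fix z assume "z \<in> As g (s@[k])"
  then obtain y where y: "z = g y" "pre y (Suc (length s)) = s @ [k]" by (auto simp: As_def)
  have "take (length s) (pre y (Suc (length s))) = take (length s) (s @ [k])" using y(2) by (rule arg_cong)
  then have "pre y (length s) = s" by simp
  then show "z \<in> As g s" unfolding As_def using y(1) by blast
qed

lemma Ng_ext: "Ng T B g u s \<Longrightarrow> Ng T B g u (s@[k])"
proof -
  assume "Ng T B g u s"
  then obtain ZS where Z: "countable ZS" "\<forall>Z\<in>ZS. B \<subseteq> Op Z" "\<forall>x\<in>As g s \<inter> cyl T u. \<exists>Z\<in>ZS. x \<notin> Op Z"
    unfolding Ng_def by auto
  have "\<forall>x\<in>As g (s@[k]) \<inter> cyl T u. \<exists>Z\<in>ZS. x \<notin> Op Z"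
  proof
    fix x assume "x \<in> As g (s@[k]) \<inter> cyl T u"
    then have "x \<in> As g s \<inter> cyl T u" using As_ext[of g s k] by auto
    then show "\<exists>Z\<in>ZS. x \<notin> Op Z" using Z(3) by auto
  qed
  then show ?thesis using Z(1,2) unfolding Ng_def by auto
qed

lemma I_wins:
  assumes tree: "is_tree A T" "T \<noteq> {}" "pruned T" and cT: "countable T"
    and Bdef: "B = {x\<in>branches T. q \<le> f x}"
    and Ag: "range g = {x\<in>branches T. f x < p}"
    and modl: "\<And>y L. \<exists>M. \<forall>y'. pre y' M = pre y M \<longrightarrow> pre (g y') L = pre (g y) L"
    and pq: "p < q" and root: "\<not> Ng T B g [] []"
  shows "winning_I T f (sigI T B g ((p+q)/2))"
proof -
  define m where "m = (p+q)/2"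
  define \<sigma> where "\<sigma> = sigI T B g m"
  have BX: "B \<subseteq> branches T" using Bdef by auto
  have legal: "legal_stratI T \<sigma>"
    unfolding legal_stratI_def
  proof (intro allI impI)
    fix h :: "('a \<times> real) list" assume h: "map fst h \<in> T"
    obtain a where "map fst h @ [a] \<in> T" using pruned_ext[OF tree(1,3) h] by blast
    then have "map fst h @ [SOME a. map fst h @ [a] \<in> T] \<in> T" by (rule someI)
    then show "map fst h @ [\<sigma> h] \<in> T" by (auto simp: \<sigma>_def sigI_def Let_def)
  qed
  have "\<not> II_wins_run f \<sigma> \<tau>" for \<tau>
  proof -
    define x where "x = play_x \<sigma> \<tau>"
    define v where "v = play_v \<sigma> \<tau>"
    define St where "St n = stn T B g m (play_hist \<sigma> \<tau> n) n" for n
    have St0: "St 0 = (nxt T B g [] [], [])" by (simp add: St_def)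
    have StS: "St (Suc n) = stp T B g m n (x n, v n) (St n)" for n
    proof -
      have "stn T B g m (play_hist \<sigma> \<tau> (Suc n)) n = St n"
        unfolding St_def by (rule stn_cong) (metis less_SucI play_hist_nth')
      moreover have "play_hist \<sigma> \<tau> (Suc n) ! n = (x n, v n)"
        by (simp add: x_def v_def play_x_eq play_v_eq)
      ultimately show ?thesis by (simp only: St_def stn.simps(2))
    qed
    have xS: "x n = \<sigma> (play_hist \<sigma> \<tau> n)" for n by (simp add: x_def play_x_eq)
    define Inv where "Inv n \<longleftrightarrow> fst (St n) \<in> B \<and> pre (fst (St n)) n = pre x n \<and>
        \<not> Ng T B g (pre (fst (St n)) n) (snd (St n)) \<and>
        (\<forall>n'\<ge>n. \<exists>k. \<not> Ng T B g (pre (fst (St n)) n') (snd (St n) @ [k]))" for n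
    have xb: "x n = fst (St n) n" if "Inv n" for n
    proof -
      let ?b = "fst (St n)"
      have "?b \<in> branches T" using that BX by (auto simp: Inv_def)
      then have "pre ?b (Suc n) \<in> T" by (simp add: branches_iff)
      moreover have "map fst (play_hist \<sigma> \<tau> n) = pre ?b n"
        using that by (simp add: Inv_def map_fst_play x_def)
      ultimately have "map fst (play_hist \<sigma> \<tau> n) @ [?b n] \<in> T" by (simp add: pre_Suc)
      then show ?thesis by (simp add: xS \<sigma>_def sigI_def St_def)
    qed
    have inv: "Inv n" for n
    proof (induction n)
      case 0
      have "pre (nxt T B g [] []) 0 = []" by simp
      then show ?case using nxt_prop[OF cT BX root] root by (simp add: Inv_def St0)
    next
      case (Suc n)
      obtain b s where bs: "St n = (b, s)" by fastforce
      have I: "b \<in> B" "pre b n = pre x n" "\<forall>n'\<ge>n. \<exists>k. \<not> Ng T B g (pre b n') (s @ [k])"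
        using Suc bs by (auto simp: Inv_def)
      have xn: "x n = b n" using xb[OF Suc] bs by simp
      have px: "pre b (Suc n) = pre x (Suc n)" using I(2) xn by (simp add: pre_Suc)
      show ?case
      proof (cases "v n > m")
        case True
        define s' where "s' = s @ [kk T B g b (Suc n) s]"
        have ng: "\<not> Ng T B g (pre b (Suc n)) s'"
          unfolding s'_def by (rule kk_prop) (use I(3) in auto)
        define b' where "b' = nxt T B g (pre b (Suc n)) s'"
        have St': "St (Suc n) = (b', s')" using True by (simp add: StS bs stp_def Let_def s'_def b'_def)
        note np = nxt_prop[OF cT BX ng, folded b'_def]
        have "pre b' (Suc n) = pre b (Suc n)" using np by (auto simp: cyl_iff)
        then show ?thesis using np ng px by (simp add: Inv_def St')
      next
        case False
        have St': "St (Suc n) = (b, s)" using False by (simp add: StS bs stp_def)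
        obtain k where "\<not> Ng T B g (pre b (Suc n)) (s@[k])" using I(3) le_SucI by blast
        then have "\<not> Ng T B g (pre b (Suc n)) s" using Ng_ext by blast
        then show ?thesis using I px by (simp add: Inv_def St')
      qed
    qed
    have II: "II_wins_run f \<sigma> \<tau> \<longleftrightarrow> ereal (f x) = limsup (\<lambda>t. ereal (v t))"
      by (simp add: II_wins_run_def x_def v_def)
    show ?thesis
    proof (cases "\<exists>N. \<forall>t\<ge>N. v t \<le> m")
      case True
      then obtain N where N: "\<And>t. t \<ge> N \<Longrightarrow> v t \<le> m" by blast
      have const: "St t = St N" if "t \<ge> N" for t
        using that
      proof (induction t)
        case 0 then show ?case by simp
      next
        case (Suc t)
        show ?case
        proof (cases "Suc t = N")
          case True then show ?thesis by simp
        next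
          case False
          then have "t \<ge> N" using Suc by simp
          then show ?thesis using Suc N[of t] by (simp add: StS stp_def)
        qed
      qed
      have "x = fst (St N)"
      proof (rule eq_if_pre[of N])
        fix n assume "n \<ge> N"
        then show "pre x n = pre (fst (St N)) n" using inv[of n] const[of n] by (simp add: Inv_def)
      qed
      then have "x \<in> B" using inv[of N] by (simp add: Inv_def)
      then have fx: "q \<le> f x" using Bdef by simp
      have "limsup (\<lambda>t. ereal (v t)) \<le> ereal m"
        by (rule limsup_le_ev[of N]) (simp add: N)
      moreover have "m < q" using pq by (simp add: m_def)
      then have "ereal m < ereal (f x)" using fx by simp
      ultimately have "limsup (\<lambda>t. ereal (v t)) < ereal (f x)" by (rule le_less_trans)
      then show ?thesis using II by auto
    next
      case False
      then have fr: "\<And>N. \<exists>t\<ge>N. v t > m" by (meson not_le)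
      define sn where "sn t = snd (St t)" for t
      have snS: "sn (Suc t) = (if v t > m then sn t @ [kk T B g (fst (St t)) (Suc t) (sn t)] else sn t)" for t
        by (simp add: sn_def StS stp_def Let_def)
      have pref: "take (length (sn n)) (sn n') = sn n" if "n \<le> n'" for n n'
        using that
      proof (induction n')
        case 0 then show ?case by simp
      next
        case (Suc n')
        show ?case
        proof (cases "n = Suc n'")
          case True then show ?thesis by simp
        next
          case False
          then have "n \<le> n'" using Suc by simp
          then have "take (length (sn n)) (sn n') = sn n" using Suc by simp
          moreover have "length (sn n) \<le> length (sn n')"
          proof -
            have "length (take (length (sn n)) (sn n')) = length (sn n)" using calculation by simp
            then show ?thesis by (simp add: min_def split: if_split_asm)
          qed
          ultimately show ?thesis by (simp add: snS)
        qed
      qed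
      have lmono: "length (sn n) \<le> length (sn n')" if "n \<le> n'" for n n'
      proof -
        have "length (take (length (sn n)) (sn n')) = length (sn n)" using pref[OF that] by simp
        then show ?thesis by (simp add: min_def split: if_split_asm)
      qed
      have unb: "\<exists>n. length (sn n) \<ge> M" for M
      proof (induction M)
        case 0 then show ?case by simp
      next
        case (Suc M)
        then obtain n where n: "length (sn n) \<ge> M" by blast
        obtain t where t: "t \<ge> n" "v t > m" using fr by blast
        have "length (sn (Suc t)) = Suc (length (sn t))" using t by (simp add: snS)
        then show ?case using lmono[OF t(1)] n by (intro exI[of _ "Suc t"]) simp
      qed
      define y where "y i = sn (LEAST n. i < length (sn n)) ! i" for i
      have prey: "pre y (length (sn n)) = sn n" for n
      proof (rule nth_equalityI)
        show "length (pre y (length (sn n))) = length (sn n)" by simp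
        fix i assume "i < length (pre y (length (sn n)))"
        then have i: "i < length (sn n)" by simp
        define ni where "ni = (LEAST n. i < length (sn n))"
        have "ni \<le> n" unfolding ni_def using i by (rule Least_le)
        have "i < length (sn ni)" unfolding ni_def using i by (rule LeastI)
        have "take (length (sn ni)) (sn n) = sn ni" using pref[OF \<open>ni \<le> n\<close>] .
        then have "sn ni ! i = sn n ! i" using \<open>i < length (sn ni)\<close> by (metis nth_take)
        moreover have "pre y (length (sn n)) ! i = y i" using i by simp
        moreover have "y i = sn ni ! i" by (simp add: y_def ni_def)
        ultimately show "pre y (length (sn n)) ! i = sn n ! i" by simp
      qed
      have "x = g y"
      proof (rule eq_if_pre[of 0])
        fix L :: nat
        obtain M where M: "\<And>y'. pre y' M = pre y M \<Longrightarrow> pre (g y') L = pre (g y) L"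
          using modl by blast
        obtain n0 where n0: "length (sn n0) \<ge> M" using unb by blast
        define n where "n = max n0 L"
        have Mn: "M \<le> length (sn n)" using lmono[of n0 n] n0 by (simp add: n_def)
        have i1: "pre (fst (St n)) n = pre x n" and i2: "\<not> Ng T B g (pre (fst (St n)) n) (snd (St n))"
          using inv[of n] unfolding Inv_def by auto
        then have "\<not> Ng T B g (pre x n) (sn n)" by (simp add: sn_def)
        from notNg_nonempty[OF this] obtain z where z: "z \<in> As g (sn n) \<inter> cyl T (pre x n)" by blast
        then obtain y' where y': "z = g y'" "pre y' (length (sn n)) = sn n" by (auto simp: As_def)
        have "pre y' (length (sn n)) = pre y (length (sn n))" using y'(2) prey[of n] by simp
        from pre_mono_eq[OF this Mn] have "pre y' M = pre y M" .
        from M[OF this] have e1: "pre z L = pre (g y) L" using y'(1) by simp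
        have "pre z n = pre x n" using z by (simp add: cyl_iff)
        from pre_mono_eq[OF this] have e2: "pre z L = pre x L" by (simp add: n_def)
        show "pre x L = pre (g y) L" using e1 e2 by simp
      qed
      then have "x \<in> range g" by simp
      then have fx: "f x < p" using Ag by auto
      have "ereal m \<le> limsup (\<lambda>t. ereal (v t))"
      proof (rule limsup_ge_freq)
        fix N obtain t where "t \<ge> N" "v t > m" using fr by blast
        then show "\<exists>n\<ge>N. ereal m \<le> ereal (v n)" by (intro exI[of _ t]) simp
      qed
      moreover have "p < m" using pq by (simp add: m_def)
      then have "ereal (f x) < ereal m" using fx by simp
      ultimately have "ereal (f x) < limsup (\<lambda>t. ereal (v t))" by (rule less_le_trans[rotated])
      then show ?thesis using II by auto
    qed
  qed
  then show ?thesis using legal by (simp add: winning_I_def \<sigma>_def m_def)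
qed



definition rr :: "nat \<Rightarrow> real" where "rr i = real_of_rat (from_nat i)"
definition hits :: "(nat \<Rightarrow> nat \<Rightarrow> 'a list set) \<Rightarrow> 'a list \<Rightarrow> nat \<Rightarrow> nat \<Rightarrow> bool" where
  "hits U u j n \<longleftrightarrow> (\<forall>k\<le>n. rr k \<le> rr j \<longrightarrow> (\<forall>mm\<le>n. \<exists>l\<le>length u. take l u \<in> U k mm))"
definition lam where "lam U u j = card {n. n < length u \<and> hits U u j n}"
definition fired where "fired U w u j \<longleftrightarrow> j < lam U u j \<and> lam U w j < lam U u j"
definition vv where
  "vv U w u = (if \<exists>j. fired U w u j then Max (rr ` {j. fired U w u j}) else - real (length u))"
definition tauII :: "(nat \<Rightarrow> nat \<Rightarrow> 'a list set) \<Rightarrow> 'a stratII" where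
  "tauII U h a = vv U (map fst h) (map fst h @ [a])"

lemma rr_rat: "r \<in> \<rat> \<Longrightarrow> \<exists>j. rr j = r"
  by (metis Rats_cases from_nat_to_nat rr_def)

lemma step_up:
  fixes a :: "nat \<Rightarrow> nat"
  assumes "a N \<le> c" "c < a t'" "N \<le> t'"
  shows "\<exists>t\<ge>N. a t \<le> c \<and> c < a (Suc t)"
  using assms
proof (induction t')
  case 0 then show ?case by simp
next
  case (Suc t')
  show ?case
  proof (cases "N = Suc t'")
    case True then show ?thesis using Suc.prems by simp
  next
    case False
    then have "N \<le> t'" using Suc.prems by simp
    show ?thesis
    proof (cases "c < a t'")
      case True then show ?thesis using Suc.IH Suc.prems \<open>N \<le> t'\<close> by blast
    next
      case False then show ?thesis using Suc.prems \<open>N \<le> t'\<close> by (intro exI[of _ t']) simp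
    qed
  qed
qed

lemma fired_finite: "finite {j. fired U w u j}"
proof -
  have "lam U u j \<le> length u" for j
  proof -
    have "{n. n < length u \<and> hits U u j n} \<subseteq> {..<length u}" by auto
    then show ?thesis unfolding lam_def by (metis card_lessThan card_mono finite_lessThan)
  qed
  then have "{j. fired U w u j} \<subseteq> {..<length u}" by (auto simp: fired_def intro: less_le_trans)
  then show ?thesis by (rule finite_subset) simp
qed

lemma II_wins:
  assumes tree: "is_tree A T" "T \<noteq> {}"
    and U: "\<And>i x. x \<in> branches T \<Longrightarrow> (rr i \<le> f x \<longleftrightarrow> (\<forall>mm. x \<in> Op (U i mm)))"
  shows "winning_II T f (tauII U)"
  unfolding winning_II_def
proof (intro allI impI)
  fix \<sigma> assume legal: "legal_stratI T \<sigma>"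
  define \<tau> where "\<tau> = tauII U"
  define x where "x = play_x \<sigma> \<tau>"
  define v where "v = play_v \<sigma> \<tau>"
  have xX: "x \<in> branches T" using legal_play_branch[OF tree legal] by (simp add: x_def)
  have vdef: "v t = vv U (pre x t) (pre x (Suc t))" for t
    by (simp add: v_def play_v_eq \<tau>_def tauII_def map_fst_play x_def pre_Suc)
  define Lm where "Lm j t = lam U (pre x t) j" for j t
  have hitsX: "hits U (pre x t) j n \<longleftrightarrow> (\<forall>k\<le>n. rr k \<le> rr j \<longrightarrow> (\<forall>mm\<le>n. \<exists>l\<le>t. pre x l \<in> U k mm))" for t j n
    unfolding hits_def by (auto simp: min_def)
  have hmono_n: "hits U (pre x t) j n \<Longrightarrow> n' \<le> n \<Longrightarrow> hits U (pre x t) j n'" for t j n n'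
    unfolding hitsX by (meson le_trans)
  have hmono_t: "hits U (pre x t) j n \<Longrightarrow> t \<le> t' \<Longrightarrow> hits U (pre x t') j n" for t t' j n
    unfolding hitsX by (meson le_trans)
  have Lm_a: "n < t \<Longrightarrow> hits U (pre x t) j n \<Longrightarrow> n < Lm j t" for n t j
  proof -
    assume a: "n < t" "hits U (pre x t) j n"
    have "{..n} \<subseteq> {n'. n' < length (pre x t) \<and> hits U (pre x t) j n'}"
      using a hmono_n by auto
    moreover have "finite {n'. n' < length (pre x t) \<and> hits U (pre x t) j n'}" by simp
    ultimately have "card {..n} \<le> Lm j t" unfolding Lm_def lam_def by (rule card_mono[rotated])
    then show ?thesis by simp
  qed
  have Lm_b: "n < Lm j t \<Longrightarrow> hits U (pre x t) j n" for n t j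
  proof (rule ccontr)
    assume a: "n < Lm j t" "\<not> hits U (pre x t) j n"
    have "{n'. n' < length (pre x t) \<and> hits U (pre x t) j n'} \<subseteq> {..<n}"
      using a(2) hmono_n by (auto simp: not_less[symmetric])
    then have "Lm j t \<le> card {..<n}" unfolding Lm_def lam_def by (rule card_mono[rotated]) simp
    then show False using a(1) by simp
  qed
  have Lm_d: "t \<le> t' \<Longrightarrow> Lm j t \<le> Lm j t'" for j t t'
  proof -
    assume "t \<le> t'"
    then have "{n. n < length (pre x t) \<and> hits U (pre x t) j n} \<subseteq> {n. n < length (pre x t') \<and> hits U (pre x t') j n}"
      using hmono_t by auto
    then show ?thesis unfolding Lm_def lam_def by (rule card_mono[rotated]) simp
  qed
  have vfired: "fired U (pre x t) (pre x (Suc t)) j \<Longrightarrow> rr j \<le> v t" for t j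
  proof -
    assume f: "fired U (pre x t) (pre x (Suc t)) j"
    then have "v t = Max (rr ` {j. fired U (pre x t) (pre x (Suc t)) j})" by (auto simp: vdef vv_def)
    moreover have "rr j \<le> Max (rr ` {j. fired U (pre x t) (pre x (Suc t)) j})"
      by (rule Max_ge) (use f fired_finite in auto)
    ultimately show ?thesis by simp
  qed
  have good: "ereal (rr j) \<le> limsup (\<lambda>t. ereal (v t))" if rj: "rr j \<le> f x" for j
  proof -
    have inS: "\<exists>l. pre x l \<in> U k mm" if "rr k \<le> rr j" for k mm
      using U[OF xX, of k] rj that by (auto simp: Op_def)
    define lw where "lw k mm = (SOME l. pre x l \<in> U k mm)" for k mm
    have lw: "pre x (lw k mm) \<in> U k mm" if "rr k \<le> rr j" for k mm
      unfolding lw_def using inS[OF that] by (rule someI_ex)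
    have unb: "\<exists>t. c < Lm j t" for c
    proof -
      define T0 where "T0 = (\<Sum>k\<le>c. \<Sum>mm\<le>c. lw k mm)"
      have le: "lw k mm \<le> T0" if "k \<le> c" "mm \<le> c" for k mm
      proof -
        have "lw k mm \<le> (\<Sum>mm\<le>c. lw k mm)" using that by (intro member_le_sum) auto
        also have "\<dots> \<le> T0" unfolding T0_def using that
          by (intro member_le_sum[where f="\<lambda>k. \<Sum>mm\<le>c. lw k mm"]) auto
        finally show ?thesis .
      qed
      define t where "t = max T0 (Suc c)"
      have "hits U (pre x t) j c" unfolding hitsX
      proof (intro allI impI)
        fix k mm assume "k \<le> c" "rr k \<le> rr j" "mm \<le> c"
        then have "lw k mm \<le> t" "pre x (lw k mm) \<in> U k mm" using lw le[of k mm] by (auto simp: t_def)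
        then show "\<exists>l\<le>t. pre x l \<in> U k mm" by blast
      qed
      then have "c < Lm j t" by (intro Lm_a) (auto simp: t_def)
      then show ?thesis by blast
    qed
    have freq: "\<exists>t\<ge>N. fired U (pre x t) (pre x (Suc t)) j" for N
    proof -
      define c where "c = max (Lm j N) j"
      obtain t' where t': "c < Lm j t'" using unb by blast
      have "N \<le> t'"
      proof (rule ccontr)
        assume "\<not> N \<le> t'"
        then have "Lm j t' \<le> Lm j N" using Lm_d by simp
        then show False using t' by (simp add: c_def)
      qed
      then obtain t where t: "t \<ge> N" "Lm j t \<le> c" "c < Lm j (Suc t)"
        using step_up[of "Lm j" N c t'] t' by (auto simp: c_def)
      then have "fired U (pre x t) (pre x (Suc t)) j"
        by (auto simp: fired_def Lm_def c_def)
      then show ?thesis using t by blast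
    qed
    show ?thesis
    proof (rule limsup_ge_freq)
      fix N obtain t where "t \<ge> N" "fired U (pre x t) (pre x (Suc t)) j" using freq by blast
      then show "\<exists>n\<ge>N. ereal (rr j) \<le> ereal (v n)" using vfired by auto
    qed
  qed
  have bad: "limsup (\<lambda>t. ereal (v t)) \<le> ereal (rr k)" if rk: "f x < rr k" for k
  proof -
    obtain m0 where m0: "x \<notin> Op (U k m0)" using U[OF xX, of k] rk by auto
    then have nl: "\<And>l. pre x l \<notin> U k m0" by (auto simp: Op_def)
    define M where "M = max k m0"
    have LmM: "Lm j t \<le> M" if "rr k \<le> rr j" for j t
    proof (rule ccontr)
      assume "\<not> Lm j t \<le> M"
      then have "hits U (pre x t) j M" by (intro Lm_b) simp
      then have "\<exists>l\<le>t. pre x l \<in> U k m0" using that unfolding hitsX M_def by simp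
      then show False using nl by blast
    qed
    define F where "F j = {t. fired U (pre x t) (pre x (Suc t)) j}" for j
    have finF: "finite (F j)" if "rr k \<le> rr j" for j
    proof -
      have "inj_on (\<lambda>t. Lm j (Suc t)) (F j)"
      proof (rule inj_onI)
        fix t1 t2 assume a: "t1 \<in> F j" "t2 \<in> F j" "Lm j (Suc t1) = Lm j (Suc t2)"
        have lt: "Lm j (Suc t1) < Lm j (Suc t2)" if "t1 < t2" "t1 \<in> F j" "t2 \<in> F j" for t1 t2
        proof -
          have "Lm j (Suc t1) \<le> Lm j t2" using that Lm_d by simp
          moreover have "Lm j t2 < Lm j (Suc t2)" using that by (simp add: F_def fired_def Lm_def)
          ultimately show ?thesis by simp
        qed
        show "t1 = t2"
        proof (rule ccontr)
          assume "t1 \<noteq> t2"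
          then have "t1 < t2 \<or> t2 < t1" by auto
          then show False using lt[of t1 t2] lt[of t2 t1] a by auto
        qed
      qed
      moreover have "(\<lambda>t. Lm j (Suc t)) ` F j \<subseteq> {..M}" using LmM that by auto
      ultimately show ?thesis by (metis finite_atMost finite_subset inj_on_finite)
    qed
    define Bad where "Bad = (\<Union>j\<in>{j. j < M \<and> rr k \<le> rr j}. F j)"
    have "finite Bad" unfolding Bad_def using finF by auto
    then obtain N1 where N1: "\<And>t. t \<ge> N1 \<Longrightarrow> t \<notin> Bad"
      by (metis finite_nat_set_iff_bounded_le not_less_eq_eq le_trans)
    obtain N2 :: nat where N2: "- rr k \<le> real N2" using real_arch_simple by blast
    have "v t \<le> rr k" if t: "t \<ge> max N1 N2" for t
    proof (cases "\<exists>j. fired U (pre x t) (pre x (Suc t)) j")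
      case True
      have fin: "finite (rr ` {j. fired U (pre x t) (pre x (Suc t)) j})" using fired_finite by (rule finite_imageI)
      have ne: "rr ` {j. fired U (pre x t) (pre x (Suc t)) j} \<noteq> {}" using True by auto
      obtain j where j: "fired U (pre x t) (pre x (Suc t)) j"
        "Max (rr ` {j. fired U (pre x t) (pre x (Suc t)) j}) = rr j"
        using Max_in[OF fin ne] by auto
      have "rr j \<le> rr k"
      proof (rule ccontr)
        assume "\<not> rr j \<le> rr k"
        then have rkj: "rr k \<le> rr j" by simp
        have "j < M" using j(1) LmM[OF rkj, of "Suc t"] by (simp add: fired_def Lm_def)
        then have "t \<in> Bad" using j(1) rkj by (auto simp: Bad_def F_def)
        then show False using N1 t by simp
      qed
      then show ?thesis using True j(2) by (simp add: vdef vv_def)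
    next
      case False
      then have "v t = - real (Suc t)" by (simp add: vdef vv_def)
      then show ?thesis using N2 t by simp
    qed
    then show ?thesis by (intro limsup_le_ev[of "max N1 N2"]) simp
  qed
  show "II_wins_run f \<sigma> \<tau>"
    unfolding II_wins_run_def
  proof (fold x_def v_def, rule antisym)
    show "ereal (f x) \<le> limsup (\<lambda>t. ereal (v t))"
    proof (rule ccontr)
      assume "\<not> ?thesis"
      then have "limsup (\<lambda>t. ereal (v t)) < ereal (f x)" by simp
      then obtain c where c: "limsup (\<lambda>t. ereal (v t)) < ereal c" "c < f x"
        using ereal_dense2 by force
      obtain r where r: "r \<in> \<rat>" "c < r" "r < f x" using Rats_dense_in_real[OF c(2)] by blast
      obtain j where "rr j = r" using rr_rat[OF r(1)] by blast
      then have "ereal r \<le> limsup (\<lambda>t. ereal (v t))" using good[of j] r by simp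
      then have "ereal r < ereal c" using c(1) by (rule le_less_trans)
      then show False using r(2) by simp
    qed
    show "limsup (\<lambda>t. ereal (v t)) \<le> ereal (f x)"
    proof (rule ccontr)
      assume "\<not> ?thesis"
      then have "ereal (f x) < limsup (\<lambda>t. ereal (v t))" by simp
      then obtain c where c: "ereal c < limsup (\<lambda>t. ereal (v t))" "f x < c"
        using ereal_dense2 by force
      obtain r where r: "r \<in> \<rat>" "f x < r" "r < c" using Rats_dense_in_real[OF c(2)] by blast
      obtain k where "rr k = r" using rr_rat[OF r(1)] by blast
      then have "limsup (\<lambda>t. ereal (v t)) \<le> ereal r" using bad[of k] r by simp
      then have "ereal c < ereal r" using c(1) by (rule less_le_trans[rotated])
      then show False using r(3) by simp
    qed
  qed
qed



lemma topspace_baire: "topspace baire_topology = UNIV"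
  by (simp add: baire_topology_def topspace_product_topology)

lemma cont_modulus:
  assumes cg: "continuous_map baire_topology (branch_topology T) g" and gX: "g y \<in> branches T"
  shows "\<exists>M. \<forall>y'. pre y' M = pre y M \<longrightarrow> pre (g y') L = pre (g y) L"
proof -
  define u where "u = pre (g y) L"
  have uT: "u \<in> T" using gX by (simp add: branches_iff u_def)
  have "openin (branch_topology T) (cyl T u)"
    unfolding branch_topology_def openin_topology_generated_by_iff
    using uT by (intro generate_topology_on.Basis) simp
  from openin_continuous_map_preimage[OF cg this]
  have op: "openin baire_topology {z. g z \<in> cyl T u}" by (simp add: topspace_baire)
  have "y \<in> {z. g z \<in> cyl T u}" using gX by (simp add: cyl_iff u_def)
  moreover have "\<forall>x\<in>{z. g z \<in> cyl T u}. \<exists>V. finite {i \<in> UNIV. V i \<noteq> topspace (euclidean::nat topology)} \<and>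
      (\<forall>i\<in>UNIV. openin euclidean (V i)) \<and> x \<in> PiE UNIV V \<and> PiE UNIV V \<subseteq> {z. g z \<in> cyl T u}"
    using op unfolding baire_topology_def openin_product_topology_alt .
  ultimately obtain V where V: "finite {i \<in> UNIV. V i \<noteq> topspace (euclidean::nat topology)}" "y \<in> PiE UNIV V"
      "PiE UNIV V \<subseteq> {z. g z \<in> cyl T u}"
    by blast
  from V(1) obtain M where M: "\<And>i. i \<in> {i \<in> UNIV. V i \<noteq> topspace (euclidean::nat topology)} \<Longrightarrow> i < M"
    unfolding finite_nat_set_iff_bounded by blast
  have "pre (g y') L = pre (g y) L" if "pre y' M = pre y M" for y'
  proof -
    have "y' \<in> PiE UNIV V"
      unfolding PiE_UNIV_domain
    proof
      fix i :: nat
      show "y' i \<in> V i"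
      proof (cases "V i = UNIV")
        case True then show ?thesis by simp
      next
        case False
        then have "i < M" using M by simp
        then have "y' i = y i" using that by (simp add: pre_eq_iff)
        moreover have "y i \<in> V i" using V(2) by (simp add: PiE_UNIV_domain Pi_def)
        ultimately show ?thesis by simp
      qed
    qed
    then have "g y' \<in> cyl T u" using V(3) by blast
    then show ?thesis by (simp add: cyl_iff u_def)
  qed
  then show ?thesis by blast
qed


lemma sandwich_or_I:
  assumes tree: "is_tree A T" "T \<noteq> {}" "pruned T" and cT: "countable T"
    and sb: "semi_Borel T f" and pq: "p < q"
  shows "(\<exists>\<sigma>. winning_I T f \<sigma>) \<or>
    (\<exists>Z::nat \<Rightarrow> 'a list set. \<forall>x\<in>branches T. (q \<le> f x \<longrightarrow> (\<forall>m. x \<in> Op (Z m))) \<and> ((\<forall>m. x \<in> Op (Z m)) \<longrightarrow> p \<le> f x))"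
proof -
  define Ap where "Ap = branches T - {x\<in>branches T. f x \<ge> p}"
  have "coanalytic_in T {x\<in>branches T. f x \<ge> p}" using sb unfolding semi_Borel_def by blast
  then have an: "analytic_in T Ap" unfolding coanalytic_in_def Ap_def by blast
  have Ap_eq: "Ap = {x\<in>branches T. f x < p}" by (auto simp: Ap_def)
  show ?thesis
  proof (cases "Ap = {}")
    case True
    have "p \<le> f x" if "x \<in> branches T" for x
      using True that unfolding Ap_eq by auto
    then have "\<forall>x\<in>branches T. (q \<le> f x \<longrightarrow> (\<forall>m. x \<in> Op ((\<lambda>_::nat. {[]}) m))) \<and> ((\<forall>m. x \<in> Op ((\<lambda>_::nat. {[]}) m)) \<longrightarrow> p \<le> f x)"
      by (simp add: Op_nil)
    then show ?thesis by (intro disjI2 exI[of _ "\<lambda>_::nat. {[]}"])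
  next
    case False
    have "\<exists>g. continuous_map baire_topology (branch_topology T) g \<and> g ` topspace baire_topology = Ap"
      using an False unfolding analytic_in_def by blast
    then obtain g where cg: "continuous_map baire_topology (branch_topology T) g"
      and rg: "g ` topspace baire_topology = Ap" by blast
    have rg': "range g = {x\<in>branches T. f x < p}" using rg by (simp add: topspace_baire Ap_eq)
    have gX: "g y \<in> branches T" for y using rg' by auto
    have modl: "\<exists>M. \<forall>y'. pre y' M = pre y M \<longrightarrow> pre (g y') L = pre (g y) L" for y L
      by (rule cont_modulus[OF cg gX])
    define B where "B = {x\<in>branches T. q \<le> f x}"
    show ?thesis
    proof (cases "Ng T B g [] []")
      case True
      from Ng_root[OF True] obtain Z :: "nat \<Rightarrow> 'a list set" where
        Z: "\<forall>m. B \<subseteq> Op (Z m)" "\<forall>x \<in> range g \<inter> branches T. \<exists>m. x \<notin> Op (Z m)" by blast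
      have "\<forall>x\<in>branches T. (q \<le> f x \<longrightarrow> (\<forall>m. x \<in> Op (Z m))) \<and> ((\<forall>m. x \<in> Op (Z m)) \<longrightarrow> p \<le> f x)"
      proof
        fix x assume x: "x \<in> branches T"
        have "q \<le> f x \<longrightarrow> (\<forall>m. x \<in> Op (Z m))" using Z(1) x by (auto simp: B_def)
        moreover have "(\<forall>m. x \<in> Op (Z m)) \<longrightarrow> p \<le> f x"
        proof (intro impI)
          assume a: "\<forall>m. x \<in> Op (Z m)"
          show "p \<le> f x"
          proof (rule ccontr)
            assume "\<not> p \<le> f x"
            then have "x \<in> range g \<inter> branches T" using x rg' by auto
            then show False using Z(2) a by blast
          qed
        qed
        ultimately show "(q \<le> f x \<longrightarrow> (\<forall>m. x \<in> Op (Z m))) \<and> ((\<forall>m. x \<in> Op (Z m)) \<longrightarrow> p \<le> f x)" by blast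
      qed
      then show ?thesis by blast
    next
      case False
      have "winning_I T f (sigI T B g ((p+q)/2))"
        by (rule I_wins[OF tree cT B_def rg' modl pq False])
      then show ?thesis by blast
    qed
  qed
qed

theorem mainTheorem12:
  fixes A :: "'a set" and T :: "'a list set" and f :: "(nat \<Rightarrow> 'a) \<Rightarrow> real"
  assumes "countable A" and "A \<noteq> {}"
    and "is_tree A T" and "T \<noteq> {}" and "pruned T"
    and "semi_Borel T f"
  shows "game_determined T f"
proof -
  have cT: "countable T"
  proof -
    have "T \<subseteq> lists A" using assms(3) by (simp add: is_tree_def)
    from countable_subset[OF this countable_lists[OF assms(1)]] show ?thesis .
  qed
  show ?thesis
  proof (cases "\<exists>\<sigma>. winning_I T f \<sigma>")
    case True then show ?thesis by (simp add: game_determined_def)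
  next
    case False
    define P where "P = (\<lambda>p q (Z::nat \<Rightarrow> 'a list set). \<forall>x\<in>branches T. (q \<le> f x \<longrightarrow> (\<forall>m. x \<in> Op (Z m))) \<and> ((\<forall>m. x \<in> Op (Z m)) \<longrightarrow> p \<le> f x))"
    have ex: "\<exists>Z. P p q Z" if "p < q" for p q
    proof -
      have "(\<exists>\<sigma>. winning_I T f \<sigma>) \<or> (\<exists>Z. P p q Z)"
        unfolding P_def by (rule sandwich_or_I[OF assms(3,4,5) cT assms(6) that])
      then show ?thesis using False by blast
    qed
    define ZZ where "ZZ p q = (SOME Z. P p q Z)" for p q
    have ZZ: "\<forall>x\<in>branches T. (q \<le> f x \<longrightarrow> (\<forall>m. x \<in> Op (ZZ p q m))) \<and> ((\<forall>m. x \<in> Op (ZZ p q m)) \<longrightarrow> p \<le> f x)"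
      if "p < q" for p q
    proof -
      have "P p q (ZZ p q)" unfolding ZZ_def using ex[OF that] by (rule someI_ex)
      then show ?thesis by (simp add: P_def)
    qed
    define U where "U i mm = ZZ (rr i - inverse (real (Suc (fst (prod_decode mm))))) (rr i) (snd (prod_decode mm))" for i mm
    have Uok: "rr i \<le> f x \<longleftrightarrow> (\<forall>mm. x \<in> Op (U i mm))" if x: "x \<in> branches T" for i x
    proof
      assume r: "rr i \<le> f x"
      show "\<forall>mm. x \<in> Op (U i mm)"
      proof
        fix mm
        have "rr i - inverse (real (Suc (fst (prod_decode mm)))) < rr i" by simp
        from ZZ[OF this] x r have "\<forall>m. x \<in> Op (ZZ (rr i - inverse (real (Suc (fst (prod_decode mm))))) (rr i) m)"
          by blast
        then show "x \<in> Op (U i mm)" unfolding U_def by blast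
      qed
    next
      assume a: "\<forall>mm. x \<in> Op (U i mm)"
      have lb: "rr i - inverse (real (Suc j)) \<le> f x" for j
      proof -
        have "\<forall>m. x \<in> Op (ZZ (rr i - inverse (real (Suc j))) (rr i) m)"
        proof
          fix m
          have "x \<in> Op (U i (prod_encode (j, m)))" using a by blast
          then show "x \<in> Op (ZZ (rr i - inverse (real (Suc j))) (rr i) m)" by (simp add: U_def)
        qed
        moreover have "rr i - inverse (real (Suc j)) < rr i" by simp
        note ZZ[OF this]
        ultimately show ?thesis using x by blast
      qed
      show "rr i \<le> f x"
      proof (rule ccontr)
        assume "\<not> rr i \<le> f x"
        then have "0 < rr i - f x" by simp
        then obtain j where "inverse (real (Suc j)) < rr i - f x"
          using reals_Archimedean by blast
        then show False using lb[of j] by simp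
      qed
    qed
    have "winning_II T f (tauII U)"
      by (rule II_wins[OF assms(3,4)]) (rule Uok)
    then show ?thesis by (auto simp: game_determined_def)
  qed
qed


end
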